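(* Let $\xi$ be a real random variable such that either $\mathbb{E}\xi^2=\infty$, or $\mathbb{E}\xi^2<\infty$ and $\mathbb{E}\xi\neq 0$. For each $n\ge1$ let $A_n$ be an $n\times n$ random matrix whose entries are i.i.d. copies of $\xi$, all matrices $A_n$ being defined on a common probability space. Let $\varepsilon\in(0,1)$. For each $n$, let $m_n$ denote the minimum of $\|\tilde A\|$ over all $n\times n$ real matrices $\tilde A$ for which there exist $I,J\subset[n]$ with $|I|,|J|\le\varepsilon n$ such that $\tilde A_{ij}=(A_n)_{ij}$ for all $(i,j)\notin I\times J$ (i.e. $\tilde A$ is obtained from $A_n$ by arbitrarily modifying the entries of a submatrix of size at most $\varepsilon n\times\varepsilon n$). Then $$\frac{m_n}{\sqrt n}\to\infty\quad\text{as } n\to\infty\quad\text{almost surely.}$$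
   Context: $[n]=\{1,\dots,n\}$. $\|\cdot\|$ denotes the operator norm (Euclidean norm to Euclidean norm). *)

theory Defs
  imports "HOL-Probability.Probability"
begin

text \<open>Real n x n matrices are represented as functions nat => nat => real,
  indexed by [n] = {1..n}; entries outside this range are irrelevant.\<close>

definition op_norm :: "nat \<Rightarrow> (nat \<Rightarrow> nat \<Rightarrow> real) \<Rightarrow> real" where
  "op_norm n B =
     (SUP x \<in> {x :: nat \<Rightarrow> real. (\<Sum>j\<in>{1..n}. (x j)\<^sup>2) \<le> 1}.
        sqrt (\<Sum>i\<in>{1..n}. (\<Sum>j\<in>{1..n}. B i j * x j)\<^sup>2))"

definition modifications :: "nat \<Rightarrow> real \<Rightarrow> (nat \<Rightarrow> nat \<Rightarrow> real) \<Rightarrow> (nat \<Rightarrow> nat \<Rightarrow> real) set" where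
  "modifications n eps B =
     {C. \<exists>I J. I \<subseteq> {1..n} \<and> J \<subseteq> {1..n} \<and>
            real (card I) \<le> eps * real n \<and> real (card J) \<le> eps * real n \<and>
            (\<forall>i\<in>{1..n}. \<forall>j\<in>{1..n}. (i, j) \<notin> I \<times> J \<longrightarrow> C i j = B i j)}"

definition min_mod_norm :: "nat \<Rightarrow> real \<Rightarrow> (nat \<Rightarrow> nat \<Rightarrow> real) \<Rightarrow> real" where
  "min_mod_norm n eps B = Inf (op_norm n ` modifications n eps B)"

end

theory Submission
  imports Defs
begin


lemma op_norm_bdd:
  "bdd_above ((\<lambda>x. sqrt (\<Sum>i\<in>{1..n}. (\<Sum>j\<in>{1..n}. B i j * x j)\<^sup>2)) `
      {x :: nat \<Rightarrow> real. (\<Sum>j\<in>{1..n}. (x j)\<^sup>2) \<le> 1})"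
proof (rule bdd_aboveI2)
  fix x :: "nat \<Rightarrow> real" assume "x \<in> {x. (\<Sum>j\<in>{1..n}. (x j)\<^sup>2) \<le> 1}"
  then have x: "(\<Sum>j\<in>{1..n}. (x j)\<^sup>2) \<le> 1" by simp
  have "(\<Sum>j\<in>{1..n}. B i j * x j)\<^sup>2 \<le> (\<Sum>j\<in>{1..n}. (B i j)\<^sup>2)" for i
  proof -
    have "(\<Sum>j\<in>{1..n}. B i j * x j)\<^sup>2 \<le> (\<Sum>j\<in>{1..n}. (B i j)\<^sup>2) * (\<Sum>j\<in>{1..n}. (x j)\<^sup>2)"
      by (rule Cauchy_Schwarz_ineq_sum)
    also have "\<dots> \<le> (\<Sum>j\<in>{1..n}. (B i j)\<^sup>2) * 1"
      by (intro mult_left_mono x sum_nonneg) auto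
    finally show ?thesis by simp
  qed
  then have "(\<Sum>i\<in>{1..n}. (\<Sum>j\<in>{1..n}. B i j * x j)\<^sup>2) \<le> (\<Sum>i\<in>{1..n}. \<Sum>j\<in>{1..n}. (B i j)\<^sup>2)"
    by (intro sum_mono) auto
  then show "sqrt (\<Sum>i\<in>{1..n}. (\<Sum>j\<in>{1..n}. B i j * x j)\<^sup>2) \<le> sqrt (\<Sum>i\<in>{1..n}. \<Sum>j\<in>{1..n}. (B i j)\<^sup>2)"
    by simp
qed

lemma op_norm_ge:
  assumes "(\<Sum>j\<in>{1..n}. (x j)\<^sup>2) \<le> 1"
  shows "sqrt (\<Sum>i\<in>{1..n}. (\<Sum>j\<in>{1..n}. B i j * x j)\<^sup>2) \<le> op_norm n B"
  unfolding op_norm_def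
  by (rule cSUP_upper[OF _ op_norm_bdd]) (use assms in simp)

lemma min_mod_norm_ge:
  assumes "\<And>C I J. I \<subseteq> {1..n} \<Longrightarrow> J \<subseteq> {1..n} \<Longrightarrow>
            real (card I) \<le> eps * real n \<Longrightarrow> real (card J) \<le> eps * real n \<Longrightarrow>
            (\<forall>i\<in>{1..n}. \<forall>j\<in>{1..n}. (i, j) \<notin> I \<times> J \<longrightarrow> C i j = B i j) \<Longrightarrow> L \<le> op_norm n C"
    and "0 \<le> eps"
  shows "L \<le> min_mod_norm n eps B"
  unfolding min_mod_norm_def
proof (rule cInf_greatest)
  have "B \<in> modifications n eps B" unfolding modifications_def
    by (rule CollectI, rule exI[of _ "{}"], rule exI[of _ "{}"]) (use assms(2) in auto)
  then show "op_norm n ` modifications n eps B \<noteq> {}" by auto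
next
  fix y assume "y \<in> op_norm n ` modifications n eps B"
  then obtain C where "C \<in> modifications n eps B" "y = op_norm n C" by auto
  then show "L \<le> y" unfolding modifications_def using assms(1) by blast
qed

lemma cols_sum_ge:
  fixes Y :: "nat \<Rightarrow> real"
  assumes nu: "0 < nu" and e: "eps < 1" and J: "J \<subseteq> {1..n}" "real (card J) \<le> eps * real n"
    and D: "(\<Sum>j\<in>{1..n}. \<bar>Y j - real n * nu\<bar>) < (1 - eps) * nu * (real n)\<^sup>2 / 2"
  shows "(1 - eps) * nu * (real n)\<^sup>2 / 2 \<le> (\<Sum>j\<in>{1..n} - J. Y j)"
    and "(1 - eps) * real n \<le> real (card ({1..n} - J))"
proof -
  have fJ: "finite J" using J(1) finite_subset by blast
  have cardc: "card ({1..n} - J) = n - card J" using J(1) fJ by (simp add: card_Diff_subset)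
  have "card J \<le> n" using J(1) by (metis card_atLeastAtMost card_mono diff_Suc_1 finite_atLeastAtMost)
  then have cm: "real (card ({1..n} - J)) = real n - real (card J)" using cardc by simp
  then show c2: "(1 - eps) * real n \<le> real (card ({1..n} - J))" using J(2) by (simp add: algebra_simps)
  have "(\<Sum>j\<in>{1..n} - J. Y j) = (\<Sum>j\<in>{1..n} - J. real n * nu) + (\<Sum>j\<in>{1..n} - J. Y j - real n * nu)"
    by (simp add: sum_subtractf)
  also have "(\<Sum>j\<in>{1..n} - J. real n * nu) = real (card ({1..n} - J)) * real n * nu" by simp
  also have "(\<Sum>j\<in>{1..n} - J. Y j - real n * nu) \<ge> - (\<Sum>j\<in>{1..n}. \<bar>Y j - real n * nu\<bar>)"
  proof -
    have "(\<Sum>j\<in>{1..n} - J. \<bar>Y j - real n * nu\<bar>) \<le> (\<Sum>j\<in>{1..n}. \<bar>Y j - real n * nu\<bar>)"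
      by (intro sum_mono2) auto
    moreover have "- (\<Sum>j\<in>{1..n} - J. \<bar>Y j - real n * nu\<bar>) \<le> (\<Sum>j\<in>{1..n} - J. Y j - real n * nu)"
      by (simp add: sum_negf[symmetric] sum_mono)
    ultimately show ?thesis by linarith
  qed
  moreover have "(1 - eps) * real n * real n * nu \<le> real (card ({1..n} - J)) * real n * nu"
    using c2 nu by (intro mult_right_mono) auto
  ultimately show "(1 - eps) * nu * (real n)\<^sup>2 / 2 \<le> (\<Sum>j\<in>{1..n} - J. Y j)"
    using D by (simp add: power2_eq_square algebra_simps)
qed


lemma case1_det:
  fixes B :: "nat \<Rightarrow> nat \<Rightarrow> real"
  assumes n: "1 \<le> n" and nu: "0 < nu" and e: "0 < eps" "eps < 1" and s: "\<bar>s\<bar> \<le> 1"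
    and D: "(\<Sum>j\<in>{1..n}. \<bar>(\<Sum>i\<in>{1..n}. s * B i j) - real n * nu\<bar>) < (1 - eps) * nu * (real n)\<^sup>2 / 2"
  shows "(1 - eps) * nu * real n / 2 \<le> min_mod_norm n eps B"
proof (rule min_mod_norm_ge)
  show "0 \<le> eps" using e by simp
  fix C I J assume I: "I \<subseteq> {1..n}" and J: "J \<subseteq> {1..n}" "real (card I) \<le> eps * real n"
    "real (card J) \<le> eps * real n"
    and CB: "\<forall>i\<in>{1..n}. \<forall>j\<in>{1..n}. (i, j) \<notin> I \<times> J \<longrightarrow> C i j = B i j"
  define J' where "J' = {1..n} - J"
  define m where "m = real (card J')"
  have S1: "(1 - eps) * nu * (real n)\<^sup>2 / 2 \<le> (\<Sum>j\<in>J'. \<Sum>i\<in>{1..n}. s * B i j)"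
    and S2: "(1 - eps) * real n \<le> m"
    using cols_sum_ge[OF nu e(2) J(1) J(3) D] unfolding J'_def m_def by auto
  have npos: "0 < real n" using n by simp
  have mpos: "0 < m" using S2 e npos by (smt (verit) mult_pos_pos)
  have mn: "m \<le> real n" unfolding m_def J'_def
    by (metis Diff_subset card_atLeastAtMost card_mono diff_Suc_1 finite_atLeastAtMost of_nat_le_iff)
  define x where "x j = (if j \<in> J' then 1 / sqrt m else 0)" for j
  have J'sub: "J' \<subseteq> {1..n}" unfolding J'_def by auto
  have "(\<Sum>j\<in>{1..n}. (x j)\<^sup>2) = (\<Sum>j\<in>{1..n}. if j \<in> J' then 1 / m else 0)"
    by (intro sum.cong) (use mpos in \<open>auto simp: x_def power_divide\<close>)
  also have "\<dots> = (\<Sum>j\<in>J'. 1 / m)" using J'sub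
    by (simp add: sum.If_cases Int_absorb1)
  also have "\<dots> = 1" using mpos unfolding m_def by simp
  finally have x1: "(\<Sum>j\<in>{1..n}. (x j)\<^sup>2) \<le> 1" by simp
  define v where "v i = (\<Sum>j\<in>{1..n}. C i j * x j)" for i
  have v: "v i = (\<Sum>j\<in>J'. B i j) / sqrt m" if "i \<in> {1..n}" for i
  proof -
    have "v i = (\<Sum>j\<in>{1..n}. if j \<in> J' then C i j / sqrt m else 0)"
      unfolding v_def x_def by (intro sum.cong) auto
    also have "\<dots> = (\<Sum>j\<in>J'. C i j / sqrt m)" using J'sub
      by (simp add: sum.If_cases Int_absorb1)
    also have "\<dots> = (\<Sum>j\<in>J'. B i j / sqrt m)"
      using CB that unfolding J'_def by (intro sum.cong) auto
    finally show ?thesis by (simp add: sum_divide_distrib)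
  qed
  have opge: "sqrt (\<Sum>i\<in>{1..n}. (v i)\<^sup>2) \<le> op_norm n C"
    unfolding v_def by (rule op_norm_ge[OF x1])
  have "(\<Sum>i\<in>{1..n}. v i)\<^sup>2 \<le> (\<Sum>i\<in>{1..n}. (v i)\<^sup>2) * real n"
    using sum_squared_le_sum_of_squares[of v "{1..n}"] by simp
  then have "\<bar>\<Sum>i\<in>{1..n}. v i\<bar> \<le> sqrt (\<Sum>i\<in>{1..n}. (v i)\<^sup>2) * sqrt (real n)"
    by (metis real_sqrt_abs real_sqrt_le_mono real_sqrt_mult)
  also have "\<dots> \<le> op_norm n C * sqrt (real n)"
    using opge by (intro mult_right_mono) auto
  finally have A: "\<bar>\<Sum>i\<in>{1..n}. v i\<bar> \<le> op_norm n C * sqrt (real n)" .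
  define T where "T = (\<Sum>j\<in>J'. \<Sum>i\<in>{1..n}. B i j)"
  have "(\<Sum>i\<in>{1..n}. v i) = T / sqrt m"
    using v unfolding T_def by (simp add: sum_divide_distrib[symmetric] sum.swap[of _ J'])
  then have Tv: "T = (\<Sum>i\<in>{1..n}. v i) * sqrt m" using mpos by simp
  have "(\<Sum>j\<in>J'. \<Sum>i\<in>{1..n}. s * B i j) = s * T"
    unfolding T_def by (simp add: sum_distrib_left)
  then have "(1 - eps) * nu * (real n)\<^sup>2 / 2 \<le> s * T" using S1 by simp
  also have "s * T \<le> \<bar>s\<bar> * \<bar>T\<bar>" by (metis abs_ge_self abs_mult)
  also have "\<dots> \<le> \<bar>T\<bar>" using s by (simp add: mult_left_le_one_le)
  also have "\<bar>T\<bar> = \<bar>\<Sum>i\<in>{1..n}. v i\<bar> * sqrt m" unfolding Tv using mpos by (simp add: abs_mult)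
  also have "\<dots> \<le> op_norm n C * sqrt (real n) * sqrt (real n)"
    using A mn mpos by (intro mult_mono) (auto intro: order.trans[OF abs_ge_zero A])
  also have "\<dots> = op_norm n C * real n" using npos by simp
  finally have "((1 - eps) * nu * real n / 2) * real n \<le> op_norm n C * real n"
    by (simp add: power2_eq_square algebra_simps)
  then show "(1 - eps) * nu * real n / 2 \<le> op_norm n C"
    using mult_le_cancel_right_pos[OF npos] by blast
qed

lemma case2_det:
  fixes B :: "nat \<Rightarrow> nat \<Rightarrow> real"
  assumes n: "1 \<le> n" and nu: "0 < nu" and e: "0 < eps" "eps < 1"
    and D: "(\<Sum>j\<in>{1..n}. \<bar>(\<Sum>i\<in>{1..n}. min ((B i j)\<^sup>2) T) - real n * nu\<bar>) < (1 - eps) * nu * (real n)\<^sup>2 / 2"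
  shows "sqrt ((1 - eps) * nu * real n / 2) \<le> min_mod_norm n eps B"
proof (rule min_mod_norm_ge)
  show "0 \<le> eps" using e by simp
  fix C I J assume I: "I \<subseteq> {1..n}" and J: "J \<subseteq> {1..n}" "real (card I) \<le> eps * real n"
    "real (card J) \<le> eps * real n"
    and CB: "\<forall>i\<in>{1..n}. \<forall>j\<in>{1..n}. (i, j) \<notin> I \<times> J \<longrightarrow> C i j = B i j"
  define J' where "J' = {1..n} - J"
  define Y where "Y j = (\<Sum>i\<in>{1..n}. min ((B i j)\<^sup>2) T)" for j
  have S1: "(1 - eps) * nu * (real n)\<^sup>2 / 2 \<le> (\<Sum>j\<in>J'. Y j)"
    and S2: "(1 - eps) * real n \<le> real (card J')"
    using cols_sum_ge[OF nu e(2) J(1) J(3) D[folded Y_def]] unfolding J'_def by auto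
  have npos: "0 < real n" using n by simp
  have mn: "real (card J') \<le> real n" unfolding J'_def
    by (metis Diff_subset card_atLeastAtMost card_mono diff_Suc_1 finite_atLeastAtMost of_nat_le_iff)
  have "\<exists>j\<in>J'. (1 - eps) * nu * real n / 2 \<le> Y j"
  proof (rule ccontr)
    assume "\<not> ?thesis"
    then have "\<forall>j\<in>J'. Y j < (1 - eps) * nu * real n / 2" by auto
    moreover have "J' \<noteq> {}"
    proof
      assume "J' = {}"
      moreover have "0 < (1 - eps) * real n" using e npos by simp
      ultimately show False using S2 by simp
    qed
    moreover have "finite J'" unfolding J'_def by auto
    ultimately have "(\<Sum>j\<in>J'. Y j) < (\<Sum>j\<in>J'. (1 - eps) * nu * real n / 2)"
      by (intro sum_strict_mono) auto
    also have "\<dots> = real (card J') * ((1 - eps) * nu * real n / 2)" by simp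
    also have "\<dots> \<le> real n * ((1 - eps) * nu * real n / 2)"
      using mn e nu npos by (intro mult_right_mono) auto
    finally show False using S1 by (simp add: power2_eq_square algebra_simps)
  qed
  then obtain j where j: "j \<in> J'" "(1 - eps) * nu * real n / 2 \<le> Y j" by auto
  define x where "x k = (if k = j then 1 else 0 :: real)" for k
  have jn: "j \<in> {1..n}" "j \<notin> J" using j unfolding J'_def by auto
  have "(\<Sum>k\<in>{1..n}. (x k)\<^sup>2) = (\<Sum>k\<in>{1..n}. if k = j then 1 else 0)"
    by (intro sum.cong) (auto simp: x_def)
  then have x1: "(\<Sum>k\<in>{1..n}. (x k)\<^sup>2) \<le> 1" using jn by simp
  have cx: "(\<Sum>k\<in>{1..n}. C i k * x k) = B i j" if "i \<in> {1..n}" for i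
  proof -
    have "(\<Sum>k\<in>{1..n}. C i k * x k) = (\<Sum>k\<in>{1..n}. if k = j then C i j else 0)"
      by (intro sum.cong) (auto simp: x_def)
    also have "\<dots> = C i j" using jn by simp
    finally show ?thesis using jn CB that by auto
  qed
  have "Y j \<le> (\<Sum>i\<in>{1..n}. (\<Sum>k\<in>{1..n}. C i k * x k)\<^sup>2)"
    unfolding Y_def using cx by (intro sum_mono) auto
  then have "sqrt (Y j) \<le> op_norm n C"
    using op_norm_ge[OF x1, of C] by (meson order.trans real_sqrt_le_mono)
  then show "sqrt ((1 - eps) * nu * real n / 2) \<le> op_norm n C"
    using j(2) by (meson order.trans real_sqrt_le_mono)
qed


lemma (in prob_space) var_sum_indep:
  fixes X :: "'i \<Rightarrow> 'a \<Rightarrow> real"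
  assumes S: "finite S" and ind: "indep_vars (\<lambda>_. borel) X S"
    and sq: "\<And>s. s \<in> S \<Longrightarrow> integrable M (\<lambda>\<omega>. (X s \<omega>)\<^sup>2)"
  shows "integrable M (\<lambda>\<omega>. (\<Sum>s\<in>S. X s \<omega> - expectation (X s))\<^sup>2)"
    and "expectation (\<lambda>\<omega>. (\<Sum>s\<in>S. X s \<omega> - expectation (X s))\<^sup>2) =
           (\<Sum>s\<in>S. expectation (\<lambda>\<omega>. (X s \<omega> - expectation (X s))\<^sup>2))"
proof -
  define Z where "Z s \<omega> = X s \<omega> - expectation (X s)" for s \<omega>
  have meas: "X s \<in> borel_measurable M" if "s \<in> S" for s
    using ind that unfolding indep_vars_def by auto
  have intX: "integrable M (X s)" if "s \<in> S" for s
    using square_integrable_imp_integrable[OF meas[OF that] sq[OF that]] .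
  have indZ: "indep_vars (\<lambda>_. borel) Z S"
    unfolding Z_def by (rule indep_vars_compose2[OF ind]) auto
  have intZ: "integrable M (Z s)" if "s \<in> S" for s
    unfolding Z_def using intX[OF that] by auto
  have EZ: "expectation (Z s) = 0" if "s \<in> S" for s
    unfolding Z_def using intX[OF that] prob_space by simp
  have sqZ: "integrable M (\<lambda>\<omega>. Z s \<omega> * Z s \<omega>)" if "s \<in> S" for s
    unfolding Z_def using intX[OF that] sq[OF that]
    by (simp add: algebra_simps power2_eq_square)
  have prodZ: "integrable M (\<lambda>\<omega>. Z s \<omega> * Z t \<omega>) \<and>
      expectation (\<lambda>\<omega>. Z s \<omega> * Z t \<omega>) = (if s = t then expectation (\<lambda>\<omega>. Z s \<omega> * Z s \<omega>) else 0)"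
    if "s \<in> S" "t \<in> S" for s t
  proof (cases "s = t")
    case True then show ?thesis using sqZ that by simp
  next
    case False
    have ist: "indep_vars (\<lambda>_. borel) Z {s, t}"
      by (rule indep_vars_subset[OF indZ]) (use that in auto)
    have pr: "(\<lambda>\<omega>. \<Prod>i\<in>{s, t}. Z i \<omega>) = (\<lambda>\<omega>. Z s \<omega> * Z t \<omega>)" using False by auto
    have "integrable M (\<lambda>\<omega>. \<Prod>i\<in>{s, t}. Z i \<omega>)"
      by (rule indep_vars_integrable[OF _ ist]) (use that intZ in auto)
    moreover have "expectation (\<lambda>\<omega>. \<Prod>i\<in>{s, t}. Z i \<omega>) = (\<Prod>i\<in>{s, t}. expectation (Z i))"
      by (rule indep_vars_lebesgue_integral[OF _ ist]) (use that intZ in auto)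
    ultimately show ?thesis using False EZ that unfolding pr by simp
  qed
  have eq: "(\<lambda>\<omega>. (\<Sum>s\<in>S. X s \<omega> - expectation (X s))\<^sup>2) = (\<lambda>\<omega>. \<Sum>s\<in>S. \<Sum>t\<in>S. Z s \<omega> * Z t \<omega>)"
    unfolding Z_def by (simp add: power2_eq_square sum_product)
  show "integrable M (\<lambda>\<omega>. (\<Sum>s\<in>S. X s \<omega> - expectation (X s))\<^sup>2)"
    unfolding eq using prodZ by auto
  have "expectation (\<lambda>\<omega>. \<Sum>s\<in>S. \<Sum>t\<in>S. Z s \<omega> * Z t \<omega>) =
      (\<Sum>s\<in>S. \<Sum>t\<in>S. expectation (\<lambda>\<omega>. Z s \<omega> * Z t \<omega>))"
    using prodZ by (simp add: Bochner_Integration.integral_sum)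
  also have "\<dots> = (\<Sum>s\<in>S. \<Sum>t\<in>S. if s = t then expectation (\<lambda>\<omega>. Z s \<omega> * Z s \<omega>) else 0)"
    using prodZ by (intro sum.cong refl) auto
  also have "\<dots> = (\<Sum>s\<in>S. expectation (\<lambda>\<omega>. Z s \<omega> * Z s \<omega>))"
    using S by (simp add: sum.delta)
  finally show "expectation (\<lambda>\<omega>. (\<Sum>s\<in>S. X s \<omega> - expectation (X s))\<^sup>2) =
           (\<Sum>s\<in>S. expectation (\<lambda>\<omega>. (X s \<omega> - expectation (X s))\<^sup>2))"
    unfolding eq by (simp add: Z_def power2_eq_square)
qed


lemma sum_col: "(\<Sum>p\<in>{1..n::nat} \<times> {j}. f p) = (\<Sum>i\<in>{1..n}. f (i, j))"
proof -
  have "{1..n} \<times> {j} = (\<lambda>i. (i, j)) ` {1..n}" by auto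
  then show ?thesis by (simp add: sum.reindex inj_on_def)
qed

lemma (in prob_space) col_bound:
  fixes A :: "nat \<Rightarrow> nat \<Rightarrow> nat \<Rightarrow> 'a \<Rightarrow> real" and h :: "real \<Rightarrow> real"
  assumes xi[measurable]: "xi \<in> borel_measurable M" and n: "1 \<le> n"
    and indn: "indep_vars (\<lambda>_. borel) (\<lambda>(i, j). A n i j) ({1..n} \<times> {1..n})"
    and dist: "\<And>i j. i \<in> {1..n} \<Longrightarrow> j \<in> {1..n} \<Longrightarrow> distr M borel (A n i j) = distr M borel xi"
    and h[measurable]: "h \<in> borel_measurable borel"
    and hsq: "integrable M (\<lambda>\<omega>. (h (xi \<omega>))\<^sup>2)"
    and nu: "nu = expectation (\<lambda>\<omega>. h (xi \<omega>))"
    and v: "v = expectation (\<lambda>\<omega>. (h (xi \<omega>) - nu)\<^sup>2)"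
    and d: "0 < delta" and nl: "4 * v / delta\<^sup>2 \<le> real n"
  shows "{\<omega>\<in>space M. delta * (real n)\<^sup>2 \<le> (\<Sum>j\<in>{1..n}. \<bar>(\<Sum>i\<in>{1..n}. h (A n i j \<omega>)) - real n * nu\<bar>)} \<in> events"
    and "prob {\<omega>\<in>space M. delta * (real n)\<^sup>2 \<le> (\<Sum>j\<in>{1..n}. \<bar>(\<Sum>i\<in>{1..n}. h (A n i j \<omega>)) - real n * nu\<bar>)}
           \<le> 4 * v / (delta\<^sup>2 * (real n)\<^sup>2)"
proof -
  define F where "F p \<omega> = h (A n (fst p) (snd p) \<omega>)" for p \<omega>
  define K where "K j = {1..n} \<times> {j}" for j :: nat
  have Ameas: "A n i j \<in> borel_measurable M" if "i \<in> {1..n}" "j \<in> {1..n}" for i j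
    using indn that unfolding indep_vars_def by auto
  have indF: "indep_vars (\<lambda>_. borel) F ({1..n} \<times> {1..n})"
  proof -
    have "indep_vars (\<lambda>_. borel) (\<lambda>p \<omega>. h ((\<lambda>(i, j). A n i j) p \<omega>)) ({1..n} \<times> {1..n})"
      by (rule indep_vars_compose2[OF indn]) auto
    then show ?thesis
      by (rule indep_vars_cong[THEN iffD1, rotated 3]) (auto simp: F_def fun_eq_iff)
  qed
  have Fmeas: "F p \<in> borel_measurable M" if "p \<in> {1..n} \<times> {1..n}" for p
    using indF that unfolding indep_vars_def by auto
  have hxi_int: "integrable M (\<lambda>\<omega>. h (xi \<omega>))"
    by (rule square_integrable_imp_integrable[OF _ hsq]) simp
  have trans_int: "integrable M (\<lambda>\<omega>. g (A n i j \<omega>)) \<longleftrightarrow> integrable M (\<lambda>\<omega>. g (xi \<omega>))"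
    and trans_exp: "expectation (\<lambda>\<omega>. g (A n i j \<omega>)) = expectation (\<lambda>\<omega>. g (xi \<omega>))"
    if "i \<in> {1..n}" "j \<in> {1..n}" "g \<in> borel_measurable borel" for g :: "real \<Rightarrow> real" and i j
  proof -
    show "integrable M (\<lambda>\<omega>. g (A n i j \<omega>)) \<longleftrightarrow> integrable M (\<lambda>\<omega>. g (xi \<omega>))"
      using integrable_distr_eq[OF Ameas[OF that(1,2)] that(3)] integrable_distr_eq[OF xi that(3)]
        dist[OF that(1,2)] by simp
    show "expectation (\<lambda>\<omega>. g (A n i j \<omega>)) = expectation (\<lambda>\<omega>. g (xi \<omega>))"
      using integral_distr[OF Ameas[OF that(1,2)] that(3)] integral_distr[OF xi that(3)]
        dist[OF that(1,2)] by simp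
  qed
  have Fsq: "integrable M (\<lambda>\<omega>. (F p \<omega>)\<^sup>2)" if "p \<in> {1..n} \<times> {1..n}" for p
    unfolding F_def using trans_int[of "fst p" "snd p" "\<lambda>x. (h x)\<^sup>2"] that hsq by auto
  have FE: "expectation (F p) = nu" if "p \<in> {1..n} \<times> {1..n}" for p
    unfolding F_def nu using trans_exp[of "fst p" "snd p" h] that by auto
  have FV: "expectation (\<lambda>\<omega>. (F p \<omega> - nu)\<^sup>2) = v" if "p \<in> {1..n} \<times> {1..n}" for p
    unfolding F_def v using trans_exp[of "fst p" "snd p" "\<lambda>x. (h x - nu)\<^sup>2"] that by auto
  define dc where "dc j \<omega> = \<bar>(\<Sum>p\<in>K j. F p \<omega>) - real n * nu\<bar>" for j \<omega>
  have Kn: "K j \<subseteq> {1..n} \<times> {1..n}" if "j \<in> {1..n}" for j using that unfolding K_def by auto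
  have dcmeas: "dc j \<in> borel_measurable M" if "j \<in> {1..n}" for j
    unfolding dc_def using Kn[OF that]
    by (intro borel_measurable_abs borel_measurable_diff borel_measurable_sum Fmeas) auto
  have dcsq: "integrable M (\<lambda>\<omega>. (dc j \<omega>)\<^sup>2) \<and> expectation (\<lambda>\<omega>. (dc j \<omega>)\<^sup>2) = real n * v"
    if j: "j \<in> {1..n}" for j
  proof -
    have ind': "indep_vars (\<lambda>_. borel) F (K j)" by (rule indep_vars_subset[OF indF Kn[OF j]])
    have eq: "(\<lambda>\<omega>. (dc j \<omega>)\<^sup>2) = (\<lambda>\<omega>. (\<Sum>p\<in>K j. F p \<omega> - expectation (F p))\<^sup>2)"
    proof
      fix \<omega>
      have "(\<Sum>p\<in>K j. expectation (F p)) = (\<Sum>p\<in>K j. nu)"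
        by (intro sum.cong) (use FE Kn[OF j] in auto)
      also have "\<dots> = real n * nu" unfolding K_def by simp
      finally have "(\<Sum>p\<in>K j. expectation (F p)) = real n * nu" .
      then have "(\<Sum>p\<in>K j. F p \<omega> - expectation (F p)) = (\<Sum>p\<in>K j. F p \<omega>) - real n * nu"
        by (simp add: sum_subtractf)
      then show "(dc j \<omega>)\<^sup>2 = (\<Sum>p\<in>K j. F p \<omega> - expectation (F p))\<^sup>2" by (simp add: dc_def)
    qed
    have fin: "finite (K j)" unfolding K_def by auto
    note vs = var_sum_indep[OF fin ind' Fsq]
    show ?thesis unfolding eq
    proof
      show "integrable M (\<lambda>\<omega>. (\<Sum>p\<in>K j. F p \<omega> - expectation (F p))\<^sup>2)"
        using vs(1) Kn[OF j] by blast
      have "expectation (\<lambda>\<omega>. (\<Sum>p\<in>K j. F p \<omega> - expectation (F p))\<^sup>2)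
          = (\<Sum>p\<in>K j. expectation (\<lambda>\<omega>. (F p \<omega> - expectation (F p))\<^sup>2))"
        using vs(2) Kn[OF j] by blast
      also have "\<dots> = (\<Sum>p\<in>K j. v)"
        using FE FV Kn[OF j] by (intro sum.cong) auto
      also have "\<dots> = real n * v" unfolding K_def by simp
      finally show "expectation (\<lambda>\<omega>. (\<Sum>p\<in>K j. F p \<omega> - expectation (F p))\<^sup>2) = real n * v" .
    qed
  qed
  have indD: "indep_vars (\<lambda>_. borel) dc {1..n}"
  proof -
    have r: "indep_vars (\<lambda>j. Pi\<^sub>M (K j) (\<lambda>_. borel)) (\<lambda>j \<omega>. restrict (\<lambda>p. F p \<omega>) (K j)) {1..n}"
      by (rule indep_vars_restrict[OF indF Kn]) (auto simp: disjoint_family_on_def K_def)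
    have "indep_vars (\<lambda>_. borel) (\<lambda>j \<omega>. (\<lambda>f. \<bar>(\<Sum>p\<in>K j. f p) - real n * nu\<bar>) (restrict (\<lambda>p. F p \<omega>) (K j))) {1..n}"
    proof (rule indep_vars_compose2[OF r])
      fix j assume "j \<in> {1..n}"
      show "(\<lambda>f. \<bar>(\<Sum>p\<in>K j. f p) - real n * nu\<bar>) \<in> Pi\<^sub>M (K j) (\<lambda>_. borel) \<rightarrow>\<^sub>M borel"
        by (intro borel_measurable_abs borel_measurable_diff borel_measurable_sum
            measurable_component_singleton) auto
    qed
    then show ?thesis
      by (rule indep_vars_cong[THEN iffD1, rotated 3]) (auto simp: dc_def fun_eq_iff)
  qed
  have dcint: "integrable M (dc j)" if "j \<in> {1..n}" for j
    using square_integrable_imp_integrable[OF dcmeas[OF that]] dcsq[OF that] by auto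
  have Ed: "expectation (dc j) \<le> sqrt (real n * v) \<and>
      expectation (\<lambda>\<omega>. (dc j \<omega> - expectation (dc j))\<^sup>2) \<le> real n * v" if j: "j \<in> {1..n}" for j
  proof -
    define c where "c = expectation (dc j)"
    have "expectation (\<lambda>\<omega>. (dc j \<omega> - c)\<^sup>2) = expectation (\<lambda>\<omega>. (dc j \<omega>)\<^sup>2 - 2 * c * dc j \<omega> + c\<^sup>2)"
      by (rule arg_cong[where f=expectation]) (simp add: fun_eq_iff power2_diff algebra_simps)
    also have "\<dots> = expectation (\<lambda>\<omega>. (dc j \<omega>)\<^sup>2) - 2 * c * c + c\<^sup>2"
      using dcsq[OF j] dcint[OF j] prob_space unfolding c_def by simp
    also have "\<dots> = real n * v - c\<^sup>2" using dcsq[OF j] by (simp add: power2_eq_square)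
    finally have e: "expectation (\<lambda>\<omega>. (dc j \<omega> - c)\<^sup>2) = real n * v - c\<^sup>2" .
    have "0 \<le> expectation (\<lambda>\<omega>. (dc j \<omega> - c)\<^sup>2)" by simp
    then have "c\<^sup>2 \<le> real n * v" using e by simp
    then have "c \<le> sqrt (real n * v)" by (simp add: real_le_rsqrt)
    then show ?thesis using e unfolding c_def by simp
  qed
  define f where "f \<omega> = (\<Sum>j\<in>{1..n}. dc j \<omega> - expectation (dc j))" for \<omega>

  have fmeas[measurable]: "f \<in> borel_measurable M" unfolding f_def
    by (intro borel_measurable_sum borel_measurable_diff dcmeas) auto
  have fsq: "integrable M (\<lambda>\<omega>. (f \<omega>)\<^sup>2)"
    using var_sum_indep(1)[OF _ indD] dcsq unfolding f_def by auto
  have fE: "expectation (\<lambda>\<omega>. (f \<omega>)\<^sup>2) \<le> (real n)\<^sup>2 * v"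
  proof -
    have "expectation (\<lambda>\<omega>. (f \<omega>)\<^sup>2) = (\<Sum>j\<in>{1..n}. expectation (\<lambda>\<omega>. (dc j \<omega> - expectation (dc j))\<^sup>2))"
      using var_sum_indep(2)[OF _ indD] dcsq unfolding f_def by auto
    also have "\<dots> \<le> (\<Sum>j\<in>{1..n}. real n * v)" using Ed by (intro sum_mono) auto
    also have "\<dots> = (real n)\<^sup>2 * v" by (simp add: power2_eq_square)
    finally show ?thesis .
  qed
  have npos: "0 < real n" using n by simp
  have v0: "0 \<le> v" unfolding v by simp
  have mu: "(\<Sum>j\<in>{1..n}. expectation (dc j)) \<le> delta * (real n)\<^sup>2 / 2"
  proof -
    have "(\<Sum>j\<in>{1..n}. expectation (dc j)) \<le> (\<Sum>j\<in>{1..n}. sqrt (real n * v))"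
      using Ed by (intro sum_mono) auto
    also have "\<dots> = real n * sqrt (real n * v)" by simp
    also have "sqrt (real n * v) \<le> delta * real n / 2"
    proof -
      have "4 * v \<le> real n * delta\<^sup>2" using nl d by (simp add: field_simps)
      then have "real n * v \<le> (delta * real n / 2)\<^sup>2" using npos
        by (simp add: power2_eq_square field_simps)
      then show ?thesis using d npos by (intro real_le_lsqrt) auto
    qed
    then have "real n * sqrt (real n * v) \<le> real n * (delta * real n / 2)"
      using npos by (intro mult_left_mono) auto
    finally show ?thesis by (simp add: power2_eq_square algebra_simps)
  qed
  have Deq: "(\<Sum>j\<in>{1..n}. \<bar>(\<Sum>i\<in>{1..n}. h (A n i j \<omega>)) - real n * nu\<bar>) = (\<Sum>j\<in>{1..n}. dc j \<omega>)" for \<omega>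
    unfolding dc_def K_def F_def sum_col by simp
  have sub: "{\<omega>\<in>space M. delta * (real n)\<^sup>2 \<le> (\<Sum>j\<in>{1..n}. \<bar>(\<Sum>i\<in>{1..n}. h (A n i j \<omega>)) - real n * nu\<bar>)}
      \<subseteq> {\<omega>\<in>space M. delta * (real n)\<^sup>2 / 2 \<le> \<bar>f \<omega>\<bar>}"
  proof safe
    fix \<omega> assume "\<omega> \<in> space M" "delta * (real n)\<^sup>2 \<le> (\<Sum>j\<in>{1..n}. \<bar>(\<Sum>i\<in>{1..n}. h (A n i j \<omega>)) - real n * nu\<bar>)"
    then have "delta * (real n)\<^sup>2 \<le> (\<Sum>j\<in>{1..n}. dc j \<omega>)" by (metis Deq)
    moreover have "f \<omega> = (\<Sum>j\<in>{1..n}. dc j \<omega>) - (\<Sum>j\<in>{1..n}. expectation (dc j))"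
      unfolding f_def by (simp add: sum_subtractf)
    ultimately show "delta * (real n)\<^sup>2 / 2 \<le> \<bar>f \<omega>\<bar>" using mu by linarith
  qed
  show ev: "{\<omega>\<in>space M. delta * (real n)\<^sup>2 \<le> (\<Sum>j\<in>{1..n}. \<bar>(\<Sum>i\<in>{1..n}. h (A n i j \<omega>)) - real n * nu\<bar>)} \<in> events"
  proof -
    have gm[measurable]: "(\<lambda>\<omega>. \<Sum>j\<in>{1..n}. dc j \<omega>) \<in> borel_measurable M"
      by (intro borel_measurable_sum dcmeas) auto
    show ?thesis unfolding Deq by measurable
  qed
  have "prob {\<omega>\<in>space M. delta * (real n)\<^sup>2 \<le> (\<Sum>j\<in>{1..n}. \<bar>(\<Sum>i\<in>{1..n}. h (A n i j \<omega>)) - real n * nu\<bar>)}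
      \<le> prob {\<omega>\<in>space M. delta * (real n)\<^sup>2 / 2 \<le> \<bar>f \<omega>\<bar>}"
    by (rule finite_measure_mono[OF sub]) simp
  also have "\<dots> \<le> expectation (\<lambda>\<omega>. (f \<omega>)\<^sup>2) / (delta * (real n)\<^sup>2 / 2)\<^sup>2"
    by (rule second_moment_method[OF fmeas fsq]) (use d npos in simp)
  also have "\<dots> \<le> (real n)\<^sup>2 * v / (delta * (real n)\<^sup>2 / 2)\<^sup>2"
    by (intro divide_right_mono fE) simp
  also have "\<dots> = 4 * v / (delta\<^sup>2 * (real n)\<^sup>2)"
    using npos d by (simp add: power2_eq_square field_simps)
  finally show "prob {\<omega>\<in>space M. delta * (real n)\<^sup>2 \<le> (\<Sum>j\<in>{1..n}. \<bar>(\<Sum>i\<in>{1..n}. h (A n i j \<omega>)) - real n * nu\<bar>)}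
           \<le> 4 * v / (delta\<^sup>2 * (real n)\<^sup>2)" .
qed


lemma (in prob_space) core_AE:
  fixes A :: "nat \<Rightarrow> nat \<Rightarrow> nat \<Rightarrow> 'a \<Rightarrow> real" and h :: "real \<Rightarrow> real"
  assumes xi: "xi \<in> borel_measurable M"
    and ind: "\<And>n. n \<ge> 1 \<Longrightarrow> indep_vars (\<lambda>_. borel) (\<lambda>(i, j). A n i j) ({1..n} \<times> {1..n})"
    and dist: "\<And>n i j. n \<ge> 1 \<Longrightarrow> i \<in> {1..n} \<Longrightarrow> j \<in> {1..n} \<Longrightarrow> distr M borel (A n i j) = distr M borel xi"
    and h: "h \<in> borel_measurable borel"
    and hsq: "integrable M (\<lambda>\<omega>. (h (xi \<omega>))\<^sup>2)"
    and nu: "nu = expectation (\<lambda>\<omega>. h (xi \<omega>))"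
    and d: "0 < delta"
  shows "AE \<omega> in M. eventually (\<lambda>n. (\<Sum>j\<in>{1..n}. \<bar>(\<Sum>i\<in>{1..n}. h (A n i j \<omega>)) - real n * nu\<bar>)
            < delta * (real n)\<^sup>2) sequentially"
proof -
  define v where "v = expectation (\<lambda>\<omega>. (h (xi \<omega>) - nu)\<^sup>2)"
  define N where "N = nat \<lceil>4 * v / delta\<^sup>2\<rceil> + 1"
  define E where "E n = {\<omega>\<in>space M. delta * (real n)\<^sup>2 \<le> (\<Sum>j\<in>{1..n}. \<bar>(\<Sum>i\<in>{1..n}. h (A n i j \<omega>)) - real n * nu\<bar>)}" for n
  define Ev where "Ev n = (if N \<le> n then E n else {})" for n
  have Nn: "1 \<le> n \<and> 4 * v / delta\<^sup>2 \<le> real n" if "N \<le> n" for n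
  proof -
    have "4 * v / delta\<^sup>2 \<le> real (nat \<lceil>4 * v / delta\<^sup>2\<rceil>)" by linarith
    then show ?thesis using that unfolding N_def by simp
  qed
  have cbn: "E n \<in> events \<and> prob (E n) \<le> 4 * v / (delta\<^sup>2 * (real n)\<^sup>2)" if "N \<le> n" for n
  proof -
    have n1: "1 \<le> n" and nl: "4 * v / delta\<^sup>2 \<le> real n" using Nn[OF that] by auto
    have dn: "\<And>i j. i \<in> {1..n} \<Longrightarrow> j \<in> {1..n} \<Longrightarrow> distr M borel (A n i j) = distr M borel xi"
      using dist n1 by blast
    show ?thesis using col_bound[where A=A and n=n and h=h and xi=xi, OF xi n1 ind[OF n1] dn h hsq nu v_def d nl] unfolding E_def by auto
  qed
  have Evm: "Ev n \<in> events" for n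
    unfolding Ev_def using cbn by auto
  have Evp: "measure M (Ev n) \<le> 4 * v / delta\<^sup>2 * inverse (real n ^ 2)" if "N \<le> n" for n
    using cbn[OF that] that unfolding Ev_def by (simp add: field_simps)
  have summ: "summable (\<lambda>n. measure M (Ev n))"
  proof (rule summable_comparison_test')
    show "summable (\<lambda>n. 4 * v / delta\<^sup>2 * inverse (real n ^ 2))"
      by (intro summable_mult inverse_power_summable) simp
    show "norm (measure M (Ev n)) \<le> 4 * v / delta\<^sup>2 * inverse (real n ^ 2)" if "N \<le> n" for n
      using Evp[OF that] by simp
  qed
  have "AE \<omega> in M. eventually (\<lambda>n. \<omega> \<in> space M - Ev n) sequentially"
    by (rule borel_cantelli_AE1[OF Evm _ summ]) (simp add: less_top[symmetric])
  then show ?thesis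
  proof (rule AE_mp, intro AE_I2 impI)
    fix \<omega> assume "\<forall>\<^sub>F n in sequentially. \<omega> \<in> space M - Ev n"
    moreover have "\<forall>\<^sub>F n in sequentially. N \<le> n" by (rule eventually_ge_at_top)
    ultimately show "\<forall>\<^sub>F n in sequentially. (\<Sum>j\<in>{1..n}. \<bar>(\<Sum>i\<in>{1..n}. h (A n i j \<omega>)) - real n * nu\<bar>)
            < delta * (real n)\<^sup>2"
      by eventually_elim (auto simp: Ev_def E_def)
  qed
qed


lemma sqrt_real_lim: "filterlim (\<lambda>n::nat. sqrt (real n)) at_top sequentially"
  by (rule filterlim_compose[OF sqrt_at_top filterlim_real_sequentially])

theorem mainTheorem2:
  fixes M :: "'a measure"
    and xi :: "'a \<Rightarrow> real"
    and A :: "nat \<Rightarrow> nat \<Rightarrow> nat \<Rightarrow> 'a \<Rightarrow> real"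
    and eps :: real
  assumes "prob_space M"
    and "xi \<in> borel_measurable M"
    and "(\<integral>\<^sup>+ \<omega>. ennreal ((xi \<omega>)\<^sup>2) \<partial>M) = \<infinity> \<or>
         ((\<integral>\<^sup>+ \<omega>. ennreal ((xi \<omega>)\<^sup>2) \<partial>M) < \<infinity> \<and> (\<integral>\<omega>. xi \<omega> \<partial>M) \<noteq> 0)"
    and "\<And>n. n \<ge> 1 \<Longrightarrow> prob_space.indep_vars M (\<lambda>_. borel) (\<lambda>(i, j). A n i j)
                              ({1..n} \<times> {1..n})"
    and "\<And>n i j. n \<ge> 1 \<Longrightarrow> i \<in> {1..n} \<Longrightarrow> j \<in> {1..n} \<Longrightarrow>
            distr M borel (A n i j) = distr M borel xi"
    and "0 < eps" and "eps < 1"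
  shows "AE \<omega> in M. filterlim (\<lambda>n. min_mod_norm n eps (\<lambda>i j. A n i j \<omega>) / sqrt (real n))
                       at_top sequentially"
proof -
  interpret prob_space M by fact
  note xi = assms(2) and ind = assms(4) and dist = assms(5) and e = assms(6,7)
  have xim[measurable]: "xi \<in> borel_measurable M" by fact
  define f where "f \<omega> n = min_mod_norm n eps (\<lambda>i j. A n i j \<omega>) / sqrt (real n)" for \<omega> n
  from assms(3) show ?thesis
  proof
    assume inf: "(\<integral>\<^sup>+ \<omega>. ennreal ((xi \<omega>)\<^sup>2) \<partial>M) = \<infinity>"
    have key: "AE \<omega> in M. eventually (\<lambda>n. real k \<le> f \<omega> n) sequentially" for k :: nat
    proof -
      define b where "b = 2 * (real k ^ 2 + 1) / (1 - eps)"
      have "0 < real k ^ 2 + 1" by (metis add_pos_nonneg zero_le_power2 zero_less_one add.commute)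
      then have b0: "0 < b" unfolding b_def using e by (intro divide_pos_pos) auto
      have sup: "(SUP T::nat. \<integral>\<^sup>+ \<omega>. ennreal (min ((xi \<omega>)\<^sup>2) (real T)) \<partial>M) = \<infinity>"
      proof -
        have "(\<integral>\<^sup>+ \<omega>. (SUP T::nat. ennreal (min ((xi \<omega>)\<^sup>2) (real T))) \<partial>M)
            = (SUP T::nat. \<integral>\<^sup>+ \<omega>. ennreal (min ((xi \<omega>)\<^sup>2) (real T)) \<partial>M)"
          by (rule nn_integral_monotone_convergence_SUP)
             (auto simp: incseq_def le_fun_def intro!: ennreal_leI)
        moreover have "(SUP T::nat. ennreal (min ((xi \<omega>)\<^sup>2) (real T))) = ennreal ((xi \<omega>)\<^sup>2)" for \<omega>
        proof (rule antisym)
          show "(SUP T::nat. ennreal (min ((xi \<omega>)\<^sup>2) (real T))) \<le> ennreal ((xi \<omega>)\<^sup>2)"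
            by (rule SUP_least) (auto intro!: ennreal_leI)
          have "(xi \<omega>)\<^sup>2 \<le> real (nat \<lceil>(xi \<omega>)\<^sup>2\<rceil>)" by linarith
          then show "ennreal ((xi \<omega>)\<^sup>2) \<le> (SUP T::nat. ennreal (min ((xi \<omega>)\<^sup>2) (real T)))"
            by (intro SUP_upper2[where i="nat \<lceil>(xi \<omega>)\<^sup>2\<rceil>"]) auto
        qed
        ultimately show ?thesis using inf by simp
      qed
      then have "ennreal b < (SUP T::nat. \<integral>\<^sup>+ \<omega>. ennreal (min ((xi \<omega>)\<^sup>2) (real T)) \<partial>M)" unfolding sup by simp
      then obtain T :: nat where T: "ennreal b < (\<integral>\<^sup>+ \<omega>. ennreal (min ((xi \<omega>)\<^sup>2) (real T)) \<partial>M)"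
        by (auto simp: less_SUP_iff)
      define h where "h x = min (x\<^sup>2) (real T)" for x :: real
      have hm[measurable]: "h \<in> borel_measurable borel" unfolding h_def by measurable
      have hint: "integrable M (\<lambda>\<omega>. h (xi \<omega>))"
        by (rule integrable_const_bound[where B="real T"]) (auto simp: h_def)
      have hsq: "integrable M (\<lambda>\<omega>. (h (xi \<omega>))\<^sup>2)"
        by (rule integrable_const_bound[where B="(real T)\<^sup>2"])
           (auto simp: h_def intro!: power_mono)
      define a where "a = expectation (\<lambda>\<omega>. h (xi \<omega>))"
      have "a = enn2real (\<integral>\<^sup>+ \<omega>. ennreal (h (xi \<omega>)) \<partial>M)"
        unfolding a_def by (rule integral_eq_nn_integral) (auto simp: h_def)
      moreover have "(\<integral>\<^sup>+ \<omega>. ennreal (h (xi \<omega>)) \<partial>M) \<le> (\<integral>\<^sup>+ \<omega>. ennreal (real T) \<partial>M)"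
        by (intro nn_integral_mono ennreal_leI) (auto simp: h_def)
      moreover have "(\<integral>\<^sup>+ \<omega>. ennreal (real T) \<partial>M) = ennreal (real T)"
        by (simp add: emeasure_space_1)
      ultimately have aX: "a = enn2real (\<integral>\<^sup>+ \<omega>. ennreal (min ((xi \<omega>)\<^sup>2) (real T)) \<partial>M)"
        and Xfin: "(\<integral>\<^sup>+ \<omega>. ennreal (min ((xi \<omega>)\<^sup>2) (real T)) \<partial>M) < top"
        unfolding h_def by (auto intro: le_less_trans)
      then have "ennreal a = (\<integral>\<^sup>+ \<omega>. ennreal (min ((xi \<omega>)\<^sup>2) (real T)) \<partial>M)" by simp
      then have "ennreal b < ennreal a" using T by simp
      then have "b < a" using b0 by (simp add: ennreal_less_iff)
      then have a0: "0 < a" using b0 by simp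
      define delta where "delta = (1 - eps) * a / 2"
      have d0: "0 < delta" unfolding delta_def using a0 e by simp
      have ae: "AE \<omega> in M. eventually (\<lambda>n. (\<Sum>j\<in>{1..n}. \<bar>(\<Sum>i\<in>{1..n}. h (A n i j \<omega>)) - real n * a\<bar>)
            < delta * (real n)\<^sup>2) sequentially"
        by (rule core_AE[OF xi ind dist hm hsq a_def d0]) auto
      show ?thesis
      proof (rule AE_mp[OF ae], intro AE_I2 impI)
        fix \<omega> assume ev: "\<forall>\<^sub>F n in sequentially. (\<Sum>j\<in>{1..n}. \<bar>(\<Sum>i\<in>{1..n}. h (A n i j \<omega>)) - real n * a\<bar>)
            < delta * (real n)\<^sup>2"
        show "\<forall>\<^sub>F n in sequentially. real k \<le> f \<omega> n"
          using ev eventually_ge_at_top[of "1::nat"]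
        proof eventually_elim
          case (elim n)
          have "sqrt ((1 - eps) * a * real n / 2) \<le> min_mod_norm n eps (\<lambda>i j. A n i j \<omega>)"
            by (rule case2_det) (use elim a0 e in \<open>auto simp: delta_def h_def\<close>)
          then have "sqrt ((1 - eps) * a * real n / 2) / sqrt (real n) \<le> f \<omega> n"
            unfolding f_def by (intro divide_right_mono) auto
          moreover have "sqrt ((1 - eps) * a * real n / 2) / sqrt (real n) = sqrt ((1 - eps) * a / 2)"
            using elim by (simp add: real_sqrt_divide[symmetric])
          moreover have "real k \<le> sqrt ((1 - eps) * a / 2)"
          proof (rule real_le_rsqrt)
            have "2 * (real k ^ 2 + 1) / (1 - eps) < a" using \<open>b < a\<close> unfolding b_def .
            then have "2 * (real k ^ 2 + 1) < a * (1 - eps)" using e by (simp add: field_simps)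
            then show "(real k)\<^sup>2 \<le> (1 - eps) * a / 2" by (simp add: algebra_simps)
          qed
          ultimately show ?case by linarith
        qed
      qed
    qed
    have "AE \<omega> in M. \<forall>k::nat. eventually (\<lambda>n. real k \<le> f \<omega> n) sequentially"
      using key by (simp add: AE_all_countable)
    then show ?thesis
    proof (rule AE_mp, intro AE_I2 impI)
      fix \<omega> assume all: "\<forall>k::nat. eventually (\<lambda>n. real k \<le> f \<omega> n) sequentially"
      show "filterlim (\<lambda>n. min_mod_norm n eps (\<lambda>i j. A n i j \<omega>) / sqrt (real n)) at_top sequentially"
        unfolding filterlim_at_top
      proof
        fix Z :: real
        have "Z \<le> real (nat \<lceil>Z\<rceil>)" by linarith
        then show "\<forall>\<^sub>F n in sequentially. Z \<le> min_mod_norm n eps (\<lambda>i j. A n i j \<omega>) / sqrt (real n)"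
          using all[rule_format, of "nat \<lceil>Z\<rceil>"] unfolding f_def
          by (auto elim: eventually_mono)
      qed
    qed
  next
    assume fin: "(\<integral>\<^sup>+ \<omega>. ennreal ((xi \<omega>)\<^sup>2) \<partial>M) < \<infinity> \<and> (\<integral>\<omega>. xi \<omega> \<partial>M) \<noteq> 0"
    define mu where "mu = expectation xi"
    define s where "s = sgn mu"
    have mu0: "mu \<noteq> 0" using fin unfolding mu_def by simp
    have s2: "s * s = 1" unfolding s_def using mu0 by (simp add: sgn_mult_self_eq)
    have sabs: "\<bar>s\<bar> \<le> 1" unfolding s_def by (simp add: abs_sgn_eq)
    define h where "h x = s * x" for x :: real
    have hm[measurable]: "h \<in> borel_measurable borel" unfolding h_def by measurable
    have xsq: "integrable M (\<lambda>\<omega>. (xi \<omega>)\<^sup>2)"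
      by (rule integrableI_bounded) (use fin in auto)
    have hsq: "integrable M (\<lambda>\<omega>. (h (xi \<omega>))\<^sup>2)"
      unfolding h_def using xsq s2 by (simp add: power_mult_distrib power2_eq_square[of s])
    have xint: "integrable M xi"
      by (rule square_integrable_imp_integrable[OF xim xsq])
    define nu where "nu = expectation (\<lambda>\<omega>. h (xi \<omega>))"
    have nu: "nu = \<bar>mu\<bar>" unfolding nu_def h_def s_def mu_def by (simp add: sgn_if abs_if)
    have nu0: "0 < nu" using mu0 nu by simp
    define delta where "delta = (1 - eps) * nu / 2"
    have d0: "0 < delta" unfolding delta_def using nu0 e by simp
    have ae: "AE \<omega> in M. eventually (\<lambda>n. (\<Sum>j\<in>{1..n}. \<bar>(\<Sum>i\<in>{1..n}. h (A n i j \<omega>)) - real n * nu\<bar>)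
          < delta * (real n)\<^sup>2) sequentially"
      by (rule core_AE[OF xi ind dist hm hsq nu_def d0]) auto
    define c where "c = (1 - eps) * nu / 2"
    have c0: "0 < c" unfolding c_def using nu0 e by simp
    show ?thesis
    proof (rule AE_mp[OF ae], intro AE_I2 impI)
      fix \<omega> assume ev: "\<forall>\<^sub>F n in sequentially. (\<Sum>j\<in>{1..n}. \<bar>(\<Sum>i\<in>{1..n}. h (A n i j \<omega>)) - real n * nu\<bar>)
            < delta * (real n)\<^sup>2"
      have lim: "filterlim (\<lambda>n::nat. c * sqrt (real n)) at_top sequentially"
        by (rule filterlim_tendsto_pos_mult_at_top[OF tendsto_const c0 sqrt_real_lim])
      show "filterlim (\<lambda>n. min_mod_norm n eps (\<lambda>i j. A n i j \<omega>) / sqrt (real n)) at_top sequentially"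
      proof (rule filterlim_at_top_mono[OF lim])
        show "\<forall>\<^sub>F n in sequentially. c * sqrt (real n) \<le> min_mod_norm n eps (\<lambda>i j. A n i j \<omega>) / sqrt (real n)"
          using ev eventually_ge_at_top[of "1::nat"]
        proof eventually_elim
          case (elim n)
          have "(1 - eps) * nu * real n / 2 \<le> min_mod_norm n eps (\<lambda>i j. A n i j \<omega>)"
            by (rule case1_det[OF _ nu0 e sabs]) (use elim in \<open>auto simp: delta_def h_def\<close>)
          then have "(1 - eps) * nu * real n / 2 / sqrt (real n) \<le> min_mod_norm n eps (\<lambda>i j. A n i j \<omega>) / sqrt (real n)"
            by (intro divide_right_mono) auto
          moreover have "(1 - eps) * nu * real n / 2 / sqrt (real n) = c * sqrt (real n)"
          proof -
            have r: "real n / sqrt (real n) = sqrt (real n)" by (rule real_div_sqrt) simp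
            have "(1 - eps) * nu * real n / 2 / sqrt (real n) = ((1 - eps) * nu / 2) * (real n / sqrt (real n))"
              by simp
            then show ?thesis unfolding c_def r .
          qed
          ultimately show ?case by simp
        qed
      qed
    qed
  qed
qed

end
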